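(* Let $\mathcal{D}$ be a clocked basic action theory and $K\in\mathbb{N}$ at least as large as every natural-number constant mentioned in $\mathcal{D}$. Then the time-abstract transition system $\mathcal{T}_{\mathcal{D}}$ has finitely many states.
   Context: Situation calculus setting: sorts action, situation, object and time (the real numbers); $S_0$ initial situation; $\mathit{do}(a,s)$ the successor situation; $\mathcal{S}$ is the set of ground situations. Fluents are relation or function symbols with last argument a situation and other arguments objects; finitely many fluents, finitely many action types, finite set $\mathcal{O}$ of object constants (unique names, domain closure). A formula is uniform in $s$ if it mentions no situation term other than $s$ and does not mention $\mathit{Poss}$. A BAT is $\mathcal{D} = \mathcal{D}_0 \cup \mathcal{D}_{poss} \cup \mathcal{D}_{ssa} \cup \mathcal{D}_{ca} \cup \mathcal{D}_{co} \cup \Sigma$ (initial description uniform in $S_0$ with complete information, precondition axioms, successor state axioms, domain closure and unique name axioms for actions and objects, foundational axioms including the ordering $\sqsubset$). $\mathit{Exec}(s)$ abbreviates $\forall a,s'(\mathit{do}(a,s')\sqsubseteq s\supset\mathit{Poss}(a,s'))$. Clock comparison: $f(\vec x,s)\bowtie v$ or $v\bowtie v'$ ($f$ functional fluent, $v,v'\in\mathbb{N}$, $\bowtie\in\{<,\leq,=,\geq,>\}$). Clocked formula: every atomic subformula mentioning a time term is a clock comparison; time-independent: no time term. A BAT is clocked if there is a distinguished action type $\mathit{wait}(t)$ (others have no time argument) and: functional fluents take time values and are $0$ at $S_0$; each functional fluent has successor state axiom $f(\vec o,\mathit{do}(a,s))=y \equiv \exists t\,(a=\mathit{wait}(t)\wedge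 y=f(\vec o,s)+t) \vee (\neg\exists t\, a=\mathit{wait}(t)) \wedge (\phi_f(\vec o,a,s)\wedge y=0 \vee \neg\phi_f(\vec o,a,s)\wedge y=f(\vec o,s))$ with $\phi_f$ time-independent, uniform in $s$; relational successor state axioms and precondition axioms have clocked right-hand sides uniform in $s$; $\mathit{Poss}(\mathit{wait}(t),s)\equiv\top$. Functional fluents are clocks; $\mathcal{C}$ the ground situation-suppressed clock terms; $\nu_\sigma(\omega)=\tau$ iff $\mathcal{D}\models\omega[\sigma]=\tau$. For $u,v\geq0$: $u\sim_K v$ iff both $>K$, or both $\leq K$ with equal floors and equal ceilings; $\mathrm{fract}(v)=v-\lfloor v\rfloor$ if $v\leq K$, else $0$. $\sigma_1\approx_{\mathcal{D}K}\sigma_2$ iff (1) they entail the same ground relational fluent atoms, and (2) $\nu_{\sigma_1}(\omega)\sim_K\nu_{\sigma_2}(\omega)$ for all $\omega\in\mathcal{C}$ and $\mathrm{fract}(\nu_{\sigma_1}(\omega))\leq\mathrm{fract}(\nu_{\sigma_1}(\omega'))$ iff $\mathrm{fract}(\nu_{\sigma_2}(\omega))\leq\mathrm{fract}(\nu_{\sigma_2}(\omega'))$ for all $\omega,\omega'\in\mathcal{C}$. $[\sigma]_{\approx_{\mathcal{D}K}}$ is the equivalence class of $\sigma$. The time-abstract transition system $\mathcal{T}_{\mathcal{D}}=(Q,q_0,\rightarrow)$ has states $Q\subseteq\mathcal{S}/\approx_{\mathcal{D}K}$, initial state $q_0=[S_0]_{\approx_{\mathcal{D}K}}$, and transitions $[\sigma]_{\approx_{\mathcal{D}K}}\rightarrow[\sigma']_{\approx_{\mathcal{D}K}}$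 whenever $\sigma'=\mathit{do}(\alpha,\sigma)$ for some ground action $\alpha$ and $\mathcal{D}\models\mathit{Exec}(\sigma')$. *)

theory Defs
  imports Complex_Main
begin

datatype cmp = Lt | Le | Eq | Ge | Gt

fun cmp_eval :: "cmp \<Rightarrow> real \<Rightarrow> real \<Rightarrow> bool" where
  "cmp_eval Lt x y = (x < y)"
| "cmp_eval Le x y = (x \<le> y)"
| "cmp_eval Eq x y = (x = y)"
| "cmp_eval Ge x y = (x \<ge> y)"
| "cmp_eval Gt x y = (x > y)"

text \<open>Ground (situation-suppressed) clocked formulas: 'f are ground relational
  fluent atoms, 'c ground clock terms. Object quantifiers and equalities between
  object / action terms are eliminated by domain closure and unique names.\<close>
datatype ('f, 'c) cform =
    CTrue
  | Atom 'f
  | ClockCmp 'c cmp nat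
  | ConstCmp nat cmp nat
  | CNot "('f, 'c) cform"
  | CAnd "('f, 'c) cform" "('f, 'c) cform"

fun eval :: "('f, 'c) cform \<Rightarrow> 'f set \<Rightarrow> ('c \<Rightarrow> real) \<Rightarrow> bool" where
  "eval CTrue R v = True"
| "eval (Atom F) R v = (F \<in> R)"
| "eval (ClockCmp c op n) R v = cmp_eval op (v c) (real n)"
| "eval (ConstCmp m op n) R v = cmp_eval op (real m) (real n)"
| "eval (CNot p) R v = (\<not> eval p R v)"
| "eval (CAnd p q) R v = (eval p R v \<and> eval q R v)"

fun atoms_of :: "('f, 'c) cform \<Rightarrow> 'f set" where
  "atoms_of CTrue = {}"
| "atoms_of (Atom F) = {F}"
| "atoms_of (ClockCmp c op n) = {}"
| "atoms_of (ConstCmp m op n) = {}"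
| "atoms_of (CNot p) = atoms_of p"
| "atoms_of (CAnd p q) = atoms_of p \<union> atoms_of q"

fun clocks_of :: "('f, 'c) cform \<Rightarrow> 'c set" where
  "clocks_of CTrue = {}"
| "clocks_of (Atom F) = {}"
| "clocks_of (ClockCmp c op n) = {c}"
| "clocks_of (ConstCmp m op n) = {}"
| "clocks_of (CNot p) = clocks_of p"
| "clocks_of (CAnd p q) = clocks_of p \<union> clocks_of q"

fun consts_of :: "('f, 'c) cform \<Rightarrow> nat set" where
  "consts_of CTrue = {}"
| "consts_of (Atom F) = {}"
| "consts_of (ClockCmp c op n) = {n}"
| "consts_of (ConstCmp m op n) = {m, n}"
| "consts_of (CNot p) = consts_of p"
| "consts_of (CAnd p q) = consts_of p \<union> consts_of q"

fun time_indep :: "('f, 'c) cform \<Rightarrow> bool" where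
  "time_indep CTrue = True"
| "time_indep (Atom F) = True"
| "time_indep (ClockCmp c op n) = False"
| "time_indep (ConstCmp m op n) = False"
| "time_indep (CNot p) = time_indep p"
| "time_indep (CAnd p q) = (time_indep p \<and> time_indep q)"

datatype 'a action = Wait real | Act 'a

datatype 'a sit = S0 | Do "'a action" "'a sit"

text \<open>A clocked BAT, given by its grounded content.
  \<^item> rel_atoms: the ground relational fluent atoms;
  \<^item> clocks: the ground clock terms \<open>\<C>\<close>;
  \<^item> gacts: the ground non-wait actions;
  \<^item> init: the relational atoms true at S0 (complete information; clocks are 0 at S0);
  \<^item> ssa_wait F / ssa_act F \<alpha>: the ground instance of the right-hand side of the
    successor state axiom of atom F for a = wait(t) / a = \<alpha> (a clocked formula);
  \<^item> reset c \<alpha>: the ground instance \<open>\<phi>_f(o,\<alpha>,s)\<close> of the clock reset condition;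
  \<^item> poss \<alpha>: the ground instance of the precondition axiom of \<alpha>.\<close>
record ('f, 'c, 'a) cbat =
  rel_atoms :: "'f set"
  clocks :: "'c set"
  gacts :: "'a set"
  init :: "'f set"
  ssa_wait :: "'f \<Rightarrow> ('f, 'c) cform"
  ssa_act :: "'f \<Rightarrow> 'a \<Rightarrow> ('f, 'c) cform"
  reset :: "'c \<Rightarrow> 'a \<Rightarrow> ('f, 'c) cform"
  poss :: "'a \<Rightarrow> ('f, 'c) cform"

definition wf_form :: "('f, 'c, 'a) cbat \<Rightarrow> ('f, 'c) cform \<Rightarrow> bool" where
  "wf_form D p \<longleftrightarrow> atoms_of p \<subseteq> rel_atoms D \<and> clocks_of p \<subseteq> clocks D"

definition clocked_bat :: "('f, 'c, 'a) cbat \<Rightarrow> bool" where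
  "clocked_bat D \<longleftrightarrow>
     finite (rel_atoms D) \<and> finite (clocks D) \<and> finite (gacts D) \<and>
     init D \<subseteq> rel_atoms D \<and>
     (\<forall>F\<in>rel_atoms D. wf_form D (ssa_wait D F)) \<and>
     (\<forall>F\<in>rel_atoms D. \<forall>\<alpha>\<in>gacts D. wf_form D (ssa_act D F \<alpha>)) \<and>
     (\<forall>\<alpha>\<in>gacts D. wf_form D (poss D \<alpha>)) \<and>
     (\<forall>c\<in>clocks D. \<forall>\<alpha>\<in>gacts D. wf_form D (reset D c \<alpha>) \<and> time_indep (reset D c \<alpha>))"

definition consts_bat :: "('f, 'c, 'a) cbat \<Rightarrow> nat set" where
  "consts_bat D =
     (\<Union>F\<in>rel_atoms D. consts_of (ssa_wait D F)) \<union>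
     (\<Union>F\<in>rel_atoms D. \<Union>\<alpha>\<in>gacts D. consts_of (ssa_act D F \<alpha>)) \<union>
     (\<Union>\<alpha>\<in>gacts D. consts_of (poss D \<alpha>)) \<union>
     (\<Union>c\<in>clocks D. \<Union>\<alpha>\<in>gacts D. consts_of (reset D c \<alpha>))"

text \<open>The (unique) model of D: relational atoms true and clock values at a situation.\<close>
fun state :: "('f, 'c, 'a) cbat \<Rightarrow> 'a sit \<Rightarrow> 'f set \<times> ('c \<Rightarrow> real)" where
  "state D S0 = (init D, (\<lambda>c. 0))"
| "state D (Do (Wait t) s) =
     (let (R, v) = state D s in
       ({F \<in> rel_atoms D. eval (ssa_wait D F) R v}, (\<lambda>c. v c + t)))"
| "state D (Do (Act \<alpha>) s) =
     (let (R, v) = state D s in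
       ({F \<in> rel_atoms D. eval (ssa_act D F \<alpha>) R v},
        (\<lambda>c. if eval (reset D c \<alpha>) R v then 0 else v c)))"

definition holds :: "('f, 'c, 'a) cbat \<Rightarrow> 'a sit \<Rightarrow> 'f set" where
  "holds D s = fst (state D s)"

definition nu :: "('f, 'c, 'a) cbat \<Rightarrow> 'a sit \<Rightarrow> 'c \<Rightarrow> real" where
  "nu D s = snd (state D s)"

fun ground_act :: "('f, 'c, 'a) cbat \<Rightarrow> 'a action \<Rightarrow> bool" where
  "ground_act D (Wait t) = (t \<ge> 0)"
| "ground_act D (Act \<alpha>) = (\<alpha> \<in> gacts D)"

fun ground_sit :: "('f, 'c, 'a) cbat \<Rightarrow> 'a sit \<Rightarrow> bool" where
  "ground_sit D S0 = True"
| "ground_sit D (Do a s) = (ground_act D a \<and> ground_sit D s)"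

fun Poss :: "('f, 'c, 'a) cbat \<Rightarrow> 'a action \<Rightarrow> 'a sit \<Rightarrow> bool" where
  "Poss D (Wait t) s = True"
| "Poss D (Act \<alpha>) s = eval (poss D \<alpha>) (holds D s) (nu D s)"

fun Exec :: "('f, 'c, 'a) cbat \<Rightarrow> 'a sit \<Rightarrow> bool" where
  "Exec D S0 = True"
| "Exec D (Do a s) = (Exec D s \<and> Poss D a s)"

definition simK :: "nat \<Rightarrow> real \<Rightarrow> real \<Rightarrow> bool" where
  "simK K u v \<longleftrightarrow> (u > real K \<and> v > real K) \<or>
     (u \<le> real K \<and> v \<le> real K \<and> \<lfloor>u\<rfloor> = \<lfloor>v\<rfloor> \<and> \<lceil>u\<rceil> = \<lceil>v\<rceil>)"

definition fractK :: "nat \<Rightarrow> real \<Rightarrow> real" where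
  "fractK K v = (if v \<le> real K then v - of_int \<lfloor>v\<rfloor> else 0)"

definition reg_equiv :: "('f, 'c, 'a) cbat \<Rightarrow> nat \<Rightarrow> 'a sit \<Rightarrow> 'a sit \<Rightarrow> bool" where
  "reg_equiv D K s1 s2 \<longleftrightarrow>
     holds D s1 = holds D s2 \<and>
     (\<forall>\<omega>\<in>clocks D. simK K (nu D s1 \<omega>) (nu D s2 \<omega>)) \<and>
     (\<forall>\<omega>\<in>clocks D. \<forall>\<omega>'\<in>clocks D.
        (fractK K (nu D s1 \<omega>) \<le> fractK K (nu D s1 \<omega>')) \<longleftrightarrow>
        (fractK K (nu D s2 \<omega>) \<le> fractK K (nu D s2 \<omega>')))"

definition cls :: "('f, 'c, 'a) cbat \<Rightarrow> nat \<Rightarrow> 'a sit \<Rightarrow> 'a sit set" where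
  "cls D K s = {s'. ground_sit D s' \<and> reg_equiv D K s s'}"

definition ts_init :: "('f, 'c, 'a) cbat \<Rightarrow> nat \<Rightarrow> 'a sit set" where
  "ts_init D K = cls D K S0"

definition ts_trans :: "('f, 'c, 'a) cbat \<Rightarrow> nat \<Rightarrow> 'a sit set \<Rightarrow> 'a sit set \<Rightarrow> bool" where
  "ts_trans D K q q' \<longleftrightarrow>
     (\<exists>\<sigma> \<alpha>. ground_sit D \<sigma> \<and> ground_act D \<alpha> \<and> q = cls D K \<sigma> \<and>
            q' = cls D K (Do \<alpha> \<sigma>) \<and> Exec D (Do \<alpha> \<sigma>))"

definition ts_states :: "('f, 'c, 'a) cbat \<Rightarrow> nat \<Rightarrow> 'a sit set set" where
  "ts_states D K = {q. (ts_trans D K)\<^sup>*\<^sup>* (ts_init D K) q}"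

end

theory Submission
  imports Defs
begin

lemma state_Wait: "state D (Do (Wait t) s) =
   ({F \<in> rel_atoms D. eval (ssa_wait D F) (holds D s) (nu D s)}, (\<lambda>c. nu D s c + t))"
proof -
  obtain R v where e: "state D s = (R, v)" by (cases "state D s")
  then have hr: "holds D s = R" and nv: "nu D s = v" by (simp_all add: holds_def nu_def)
  show ?thesis unfolding hr nv using e by simp
qed

lemma state_Act: "state D (Do (Act a) s) =
   ({F \<in> rel_atoms D. eval (ssa_act D F a) (holds D s) (nu D s)},
    (\<lambda>c. if eval (reset D c a) (holds D s) (nu D s) then 0 else nu D s c))"
proof -
  obtain R v where e: "state D s = (R, v)" by (cases "state D s")
  then have hr: "holds D s = R" and nv: "nu D s = v" by (simp_all add: holds_def nu_def)
  show ?thesis unfolding hr nv using e by simp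
qed

lemma ground_props:
  assumes "init D \<subseteq> rel_atoms D" "ground_sit D s"
  shows "holds D s \<subseteq> rel_atoms D \<and> (\<forall>c. nu D s c \<ge> 0)"
  using assms(2)
proof (induction s)
  case S0
  then show ?case using assms(1) by (simp add: holds_def nu_def)
next
  case (Do a s)
  then show ?case
  proof (cases a)
    case (Wait t)
    then show ?thesis using Do
      by (auto simp: state_Wait holds_def[of D "Do _ _"] nu_def[of D "Do _ _"] simp del: state.simps)
  next
    case (Act b)
    then show ?thesis using Do
      by (auto simp: state_Act holds_def[of D "Do _ _"] nu_def[of D "Do _ _"] simp del: state.simps)
  qed
qed

definition key :: "nat \<Rightarrow> real \<Rightarrow> (int \<times> int) option" where
  "key K u = (if u > real K then None else Some (\<lfloor>u\<rfloor>, \<lceil>u\<rceil>))"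

lemma simK_key: "simK K u v \<longleftrightarrow> key K u = key K v"
  unfolding simK_def key_def by auto

definition sig where
  "sig D K s = (holds D s, {(\<omega>, key K (nu D s \<omega>)) | \<omega>. \<omega> \<in> clocks D},
     {(\<omega>,\<omega>'). \<omega> \<in> clocks D \<and> \<omega>' \<in> clocks D \<and> fractK K (nu D s \<omega>) \<le> fractK K (nu D s \<omega>')})"

lemma sig_eq_reg:
  assumes "sig D K s1 = sig D K s2"
  shows "reg_equiv D K s1 s = reg_equiv D K s2 s"
proof -
  from assms have h: "holds D s1 = holds D s2" by (simp add: sig_def)
  from assms have k0: "{(\<omega>, key K (nu D s1 \<omega>)) | \<omega>. \<omega> \<in> clocks D} = {(\<omega>, key K (nu D s2 \<omega>)) | \<omega>. \<omega> \<in> clocks D}"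
    by (simp add: sig_def)
  have k: "key K (nu D s1 \<omega>) = key K (nu D s2 \<omega>)" if "\<omega> \<in> clocks D" for \<omega>
  proof -
    have "(\<omega>, key K (nu D s1 \<omega>)) \<in> {(\<omega>, key K (nu D s2 \<omega>)) | \<omega>. \<omega> \<in> clocks D}"
      using that k0 by blast
    then show ?thesis by auto
  qed
  from assms have f0: "{(\<omega>,\<omega>'). \<omega> \<in> clocks D \<and> \<omega>' \<in> clocks D \<and> fractK K (nu D s1 \<omega>) \<le> fractK K (nu D s1 \<omega>')}
    = {(\<omega>,\<omega>'). \<omega> \<in> clocks D \<and> \<omega>' \<in> clocks D \<and> fractK K (nu D s2 \<omega>) \<le> fractK K (nu D s2 \<omega>')}"
    by (simp add: sig_def)
  have f: "(fractK K (nu D s1 \<omega>) \<le> fractK K (nu D s1 \<omega>')) = (fractK K (nu D s2 \<omega>) \<le> fractK K (nu D s2 \<omega>'))"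
    if "\<omega> \<in> clocks D" "\<omega>' \<in> clocks D" for \<omega> \<omega>'
    using f0 that by (simp add: set_eq_iff) (metis (no_types, lifting))
  show ?thesis unfolding reg_equiv_def simK_key using h k f by auto
qed

lemma finite_image_via:
  assumes "finite (f ` A)" "\<And>x y. x \<in> A \<Longrightarrow> y \<in> A \<Longrightarrow> f x = f y \<Longrightarrow> g x = g y"
  shows "finite (g ` A)"
proof -
  have "g ` A \<subseteq> (\<lambda>z. g (SOME x. x \<in> A \<and> f x = z)) ` (f ` A)"
  proof
    fix y assume "y \<in> g ` A"
    then obtain x where x: "x \<in> A" "y = g x" by auto
    have "\<exists>x'. x' \<in> A \<and> f x' = f x" using x by auto
    then have "(SOME x'. x' \<in> A \<and> f x' = f x) \<in> A \<and> f (SOME x'. x' \<in> A \<and> f x' = f x) = f x"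
      by (rule someI_ex)
    then have "g (SOME x'. x' \<in> A \<and> f x' = f x) = g x" using assms(2) x by blast
    then show "y \<in> (\<lambda>z. g (SOME x. x \<in> A \<and> f x = z)) ` (f ` A)" using x by force
  qed
  then show ?thesis using assms(1) finite_subset by blast
qed

theorem lemma4:
  fixes D :: "('f, 'c, 'a) cbat" and K :: nat
  assumes "clocked_bat D"
    and "\<forall>n\<in>consts_bat D. n \<le> K"
  shows "finite (ts_states D K)"
proof -
  let ?G = "{s. ground_sit D s}"
  from assms(1) have fin: "finite (rel_atoms D)" "finite (clocks D)" "init D \<subseteq> rel_atoms D"
    by (auto simp: clocked_bat_def)
  have sub: "ts_states D K \<subseteq> cls D K ` ?G"
  proof
    fix q assume "q \<in> ts_states D K"
    then have "(ts_trans D K)\<^sup>*\<^sup>* (ts_init D K) q" by (simp add: ts_states_def)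
    then show "q \<in> cls D K ` ?G"
    proof (induction rule: rtranclp_induct)
      case base
      then show ?case by (force simp: ts_init_def)
    next
      case (step y z)
      then obtain \<sigma> \<alpha> where "ground_sit D \<sigma>" "ground_act D \<alpha>" "z = cls D K (Do \<alpha> \<sigma>)"
        unfolding ts_trans_def by blast
      then show ?case by force
    qed
  qed
  define B where "B = insert None (Some ` ({0..int K} \<times> {0..int K}))"
  have finB: "finite B" unfolding B_def by simp
  have keyB: "key K u \<in> B" if "u \<ge> 0" for u
  proof (cases "u > real K")
    case True then show ?thesis by (simp add: key_def B_def)
  next
    case False
    then have "\<lfloor>u\<rfloor> \<ge> 0" "\<lfloor>u\<rfloor> \<le> int K" "\<lceil>u\<rceil> \<ge> 0" "\<lceil>u\<rceil> \<le> int K"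
      using that by (simp_all add: ceiling_le_iff le_floor_iff floor_le_iff)
    with False show ?thesis by (simp add: key_def B_def)
  qed
  have "sig D K ` ?G \<subseteq> Pow (rel_atoms D) \<times> Pow (clocks D \<times> B) \<times> Pow (clocks D \<times> clocks D)"
  proof
    fix x assume "x \<in> sig D K ` ?G"
    then obtain s where s: "ground_sit D s" "x = sig D K s" by auto
    from ground_props[OF fin(3) s(1)] have "holds D s \<subseteq> rel_atoms D" "\<forall>c. nu D s c \<ge> 0" by auto
    then show "x \<in> Pow (rel_atoms D) \<times> Pow (clocks D \<times> B) \<times> Pow (clocks D \<times> clocks D)"
      using s keyB unfolding sig_def by auto
  qed
  then have "finite (sig D K ` ?G)"
    by (rule finite_subset) (use fin finB in simp)
  then have "finite (cls D K ` ?G)"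
  proof (rule finite_image_via)
    fix x y assume "sig D K x = sig D K y"
    then show "cls D K x = cls D K y" unfolding cls_def using sig_eq_reg[of D K x y] by blast
  qed
  then show ?thesis using sub finite_subset by blast
qed

end
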